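(* The quotient map $\pi\colon\Pi_*\to\Pi_*/\mathbb{R}_+$ is a principal $\mathbb{R}_+$-bundle. That is, the $\mathbb{R}_+$-action on $\Pi_*$ is free, and whenever $\mathcal{P}_n\in\Pi_*$, $t_n\in\mathbb{R}_+$, $\mathcal{P}_n\to\mathcal{P}\in\Pi_*$ and $t_n\mathcal{P}_n\to t\mathcal{P}$ weakly, we have $t_n\to t$.
   Context: mm-spaces are triples $(X,d_X,\mu_X)$ with $(X,d_X)$ complete separable metric and $\mu_X$ a Borel probability measure, with $X=\operatorname{supp}\mu_X$. $\mathcal{X}$ is the set of their isomorphism classes under measure-preserving isometries of supports. Box distance: $\square(X,Y)$ is the infimum of $\varepsilon\ge0$ such that there exist Borel maps $\varphi,\psi$ from $[0,1)$ pushing Lebesgue measure to $\mu_X,\mu_Y$ and a Borel $I_0$ of measure $\ge1-\varepsilon$ with $|d_X(\varphi(s),\varphi(t))-d_Y(\psi(s),\psi(t))|\le\varepsilon$ on $I_0$. $Y\prec X$ means there is a 1-Lipschitz $f\colon X\to Y$ with $f_*\mu_X=\mu_Y$. A pyramid is a nonempty $\square$-closed subset of $\mathcal{X}$ that is downward closed under $\prec$ and such that any two elements are dominated by a common element. $\Pi$ is the set of pyramids. Weak convergence: $\mathcal{P}_n\to\mathcal{P}$ iff $\square(X,\mathcal{P}_n)\to0$ for $X\in\mathcal{P}$ and $\liminf\square(X,\mathcal{P}_n)>0$ for $X\notin\mathcal{P}$. $\mathbb{R}_+$ acts on $\Pi$ by $t\mathcal{P}=\{(X,t\,d_X,\mu_X):X\in\mathcal{P}\}$.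 $\Pi_*=\Pi\setminus\mathrm{Fix}(\Pi)$, with the quotient topology on $\Pi_*/\mathbb{R}_+$. A free action with quotient map $\pi$ is a principal $\mathbb{R}_+$-bundle if the translation function $\tau(e,e')$, defined for $\pi(e)=\pi(e')$ by $e'=\tau(e,e')e$, is continuous. *)

theory Defs
  imports "HOL-Analysis.Analysis" "HOL-Probability.Probability"
begin

text \<open>An mm-space is represented concretely as a pair (d, mu) where the carrier
  X = space mu is a subset of the fixed type real (every complete separable metric
  space has cardinality at most the continuum, so every mm-space has such a
  representative). Isomorphism classes are not formed explicitly: all notions
  below (box distance, Lipschitz domination, pyramids) are invariant under
  mm-isomorphism, and pyramids are automatically closed under isomorphism.\<close>

type_synonym mm = "(real \<Rightarrow> real \<Rightarrow> real) \<times> real measure"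

definition mm_dist :: "mm \<Rightarrow> real \<Rightarrow> real \<Rightarrow> real" where
  "mm_dist X = fst X"

definition mm_meas :: "mm \<Rightarrow> real measure" where
  "mm_meas X = snd X"

definition mm_carrier :: "mm \<Rightarrow> real set" where
  "mm_carrier X = space (snd X)"

definition metric_borel :: "real set \<Rightarrow> (real \<Rightarrow> real \<Rightarrow> real) \<Rightarrow> real set set" where
  "metric_borel M d = sigma_sets M {U. openin (Metric_space.mtopology M d) U}"

definition is_mm :: "mm \<Rightarrow> bool" where
  "is_mm X \<longleftrightarrow>
     (let M = mm_carrier X; d = mm_dist X; \<mu> = mm_meas X in
        Metric_space M d \<and>
        Metric_space.mcomplete M d \<and>
        separable_space (Metric_space.mtopology M d) \<and>
        prob_space \<mu> \<and>
        sets \<mu> = metric_borel M d \<and>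
        \<comment> \<open>X = supp mu: every open ball has positive measure\<close>
        (\<forall>x\<in>M. \<forall>r>0. measure \<mu> (Metric_space.mball M d x r) > 0))"

definition unit_leb :: "real measure" where
  "unit_leb = restrict_space lborel {0..<1}"

definition parametrization :: "(real \<Rightarrow> real) \<Rightarrow> mm \<Rightarrow> bool" where
  "parametrization \<phi> X \<longleftrightarrow>
     \<phi> \<in> measurable unit_leb (mm_meas X) \<and> distr unit_leb (mm_meas X) \<phi> = mm_meas X"

definition box :: "mm \<Rightarrow> mm \<Rightarrow> real" where
  "box X Y = Inf {\<epsilon>. \<epsilon> \<ge> 0 \<and>
     (\<exists>\<phi> \<psi> I0. parametrization \<phi> X \<and> parametrization \<psi> Y \<and>
        I0 \<in> sets lborel \<and> I0 \<subseteq> {0..<1} \<and> measure lborel I0 \<ge> 1 - \<epsilon> \<and>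
        (\<forall>s\<in>I0. \<forall>t\<in>I0.
           \<bar>mm_dist X (\<phi> s) (\<phi> t) - mm_dist Y (\<psi> s) (\<psi> t)\<bar> \<le> \<epsilon>))}"

definition box_set :: "mm \<Rightarrow> mm set \<Rightarrow> real" where
  "box_set X P = Inf (box X ` P)"

definition dominated :: "mm \<Rightarrow> mm \<Rightarrow> bool" where
  "dominated Y X \<longleftrightarrow>
     (\<exists>f. f \<in> mm_carrier X \<rightarrow> mm_carrier Y \<and>
        (\<forall>x\<in>mm_carrier X. \<forall>x'\<in>mm_carrier X.
            mm_dist Y (f x) (f x') \<le> mm_dist X x x') \<and>
        f \<in> measurable (mm_meas X) (mm_meas Y) \<and>
        distr (mm_meas X) (mm_meas Y) f = mm_meas Y)"

definition pyramid :: "mm set \<Rightarrow> bool" where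
  "pyramid P \<longleftrightarrow>
     P \<noteq> {} \<and> (\<forall>X\<in>P. is_mm X) \<and>
     \<comment> \<open>closed w.r.t. the box distance\<close>
     (\<forall>X. is_mm X \<longrightarrow> (\<forall>\<epsilon>>0. \<exists>Y\<in>P. box X Y < \<epsilon>) \<longrightarrow> X \<in> P) \<and>
     \<comment> \<open>downward closed under Lipschitz domination\<close>
     (\<forall>X\<in>P. \<forall>Y. is_mm Y \<longrightarrow> dominated Y X \<longrightarrow> Y \<in> P) \<and>
     \<comment> \<open>directed\<close>
     (\<forall>X\<in>P. \<forall>Y\<in>P. \<exists>Z\<in>P. dominated X Z \<and> dominated Y Z)"

definition weak_conv :: "(nat \<Rightarrow> mm set) \<Rightarrow> mm set \<Rightarrow> bool" where
  "weak_conv Ps P \<longleftrightarrow>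
     (\<forall>X\<in>P. (\<lambda>n. box_set X (Ps n)) \<longlonglongrightarrow> 0) \<and>
     (\<forall>X. is_mm X \<longrightarrow> X \<notin> P \<longrightarrow>
        liminf (\<lambda>n. ereal (box_set X (Ps n))) > 0)"

definition scale_mm :: "real \<Rightarrow> mm \<Rightarrow> mm" where
  "scale_mm t X = ((\<lambda>x y. t * mm_dist X x y), mm_meas X)"

definition scale_pyr :: "real \<Rightarrow> mm set \<Rightarrow> mm set" where
  "scale_pyr t P = scale_mm t ` P"

text \<open>Pi_* : pyramids that are not fixed by the action of R_+ = (0, infinity).\<close>
definition Pi_star :: "mm set set" where
  "Pi_star = {P. pyramid P \<and> \<not> (\<forall>t>0. scale_pyr t P = P)}"

end

theory Submission
  imports Defs
begin

lemma scale_mm_mult[simp]: "scale_mm a (scale_mm b X) = scale_mm (a*b) X"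
  by (simp add: scale_mm_def mm_dist_def mm_meas_def mult.assoc)
lemma scale_mm_one[simp]: "scale_mm 1 X = X"
  by (simp add: scale_mm_def mm_dist_def mm_meas_def)
lemma scale_meas[simp]: "mm_meas (scale_mm c X) = mm_meas X"
  by (simp add: scale_mm_def mm_meas_def)
lemma scale_carrier[simp]: "mm_carrier (scale_mm c X) = mm_carrier X"
  by (simp add: scale_mm_def mm_carrier_def mm_meas_def)
lemma scale_dist[simp]: "mm_dist (scale_mm c X) = (\<lambda>x y. c * mm_dist X x y)"
  by (simp add: scale_mm_def mm_dist_def)

lemma metric_scale:
  assumes "Metric_space M d" "(c::real) > 0"
  shows "Metric_space M (\<lambda>x y. c * d x y)"
  using assms unfolding Metric_space_def
  by (auto simp: distrib_left[symmetric] mult_left_mono)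

lemma mball_scale:
  assumes "Metric_space M d" "(c::real) > 0"
  shows "Metric_space.mball M (\<lambda>x y. c * d x y) x r = Metric_space.mball M d x (r/c)"
  using assms metric_scale[OF assms]
  by (auto simp: Metric_space.mball_def[OF metric_scale[OF assms]] Metric_space.mball_def[OF assms(1)] field_simps)

lemma mopen_scale:
  assumes MS: "Metric_space M d" and "(c::real) > 0"
  shows "Metric_space.mopen M (\<lambda>x y. c * d x y) = Metric_space.mopen M d"
proof (rule ext)
  fix U
  have "(\<exists>r>0. Metric_space.mball M (\<lambda>x y. c * d x y) x r \<subseteq> U) \<longleftrightarrow>
        (\<exists>r>0. Metric_space.mball M d x r \<subseteq> U)" for x
  proof
    assume "\<exists>r>0. Metric_space.mball M (\<lambda>x y. c * d x y) x r \<subseteq> U"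
    then obtain r where "r > 0" "Metric_space.mball M (\<lambda>x y. c * d x y) x r \<subseteq> U" by blast
    then show "\<exists>r>0. Metric_space.mball M d x r \<subseteq> U"
      using assms by (intro exI[of _ "r/c"]) (auto simp: mball_scale[OF MS])
  next
    assume "\<exists>r>0. Metric_space.mball M d x r \<subseteq> U"
    then obtain r where "r > 0" "Metric_space.mball M d x r \<subseteq> U" by blast
    then show "\<exists>r>0. Metric_space.mball M (\<lambda>x y. c * d x y) x r \<subseteq> U"
      using assms by (intro exI[of _ "c*r"]) (auto simp: mball_scale[OF MS])
  qed
  then show "Metric_space.mopen M (\<lambda>x y. c * d x y) U = Metric_space.mopen M d U"
    by (simp add: Metric_space.mopen_def[OF metric_scale[OF assms]] Metric_space.mopen_def[OF MS])
qed

lemma mtop_scale: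
  assumes MS: "Metric_space M d" and "(c::real) > 0"
  shows "Metric_space.mtopology M (\<lambda>x y. c * d x y) = Metric_space.mtopology M d"
  using assms by (simp add: Metric_space.mtopology_def[OF metric_scale[OF assms]] Metric_space.mtopology_def[OF MS] mopen_scale[OF assms])

lemma MCauchy_scale:
  assumes MS: "Metric_space M d" and "(c::real) > 0"
  shows "Metric_space.MCauchy M (\<lambda>x y. c * d x y) = Metric_space.MCauchy M d"
proof (rule ext)
  fix \<sigma> :: "nat \<Rightarrow> 'a"
  have "(\<forall>\<epsilon>>0. \<exists>N. \<forall>n n'. N \<le> n \<longrightarrow> N \<le> n' \<longrightarrow> c * d (\<sigma> n) (\<sigma> n') < \<epsilon>) \<longleftrightarrow>
        (\<forall>\<epsilon>>0. \<exists>N. \<forall>n n'. N \<le> n \<longrightarrow> N \<le> n' \<longrightarrow> d (\<sigma> n) (\<sigma> n') < \<epsilon>)"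
  proof safe
    fix \<epsilon> :: real assume H: "\<forall>\<epsilon>>0. \<exists>N. \<forall>n n'. N \<le> n \<longrightarrow> N \<le> n' \<longrightarrow> c * d (\<sigma> n) (\<sigma> n') < \<epsilon>" "\<epsilon> > 0"
    then obtain N where "\<forall>n n'. N \<le> n \<longrightarrow> N \<le> n' \<longrightarrow> c * d (\<sigma> n) (\<sigma> n') < c * \<epsilon>"
      using assms by (meson mult_pos_pos)
    then show "\<exists>N. \<forall>n n'. N \<le> n \<longrightarrow> N \<le> n' \<longrightarrow> d (\<sigma> n) (\<sigma> n') < \<epsilon>"
      using assms by auto
  next
    fix \<epsilon> :: real assume H: "\<forall>\<epsilon>>0. \<exists>N. \<forall>n n'. N \<le> n \<longrightarrow> N \<le> n' \<longrightarrow> d (\<sigma> n) (\<sigma> n') < \<epsilon>" "\<epsilon> > 0"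
    then obtain N where "\<forall>n n'. N \<le> n \<longrightarrow> N \<le> n' \<longrightarrow> d (\<sigma> n) (\<sigma> n') < \<epsilon> / c"
      using assms by (meson divide_pos_pos)
    then show "\<exists>N. \<forall>n n'. N \<le> n \<longrightarrow> N \<le> n' \<longrightarrow> c * d (\<sigma> n) (\<sigma> n') < \<epsilon>"
      using assms by (auto simp: field_simps)
  qed
  then show "Metric_space.MCauchy M (\<lambda>x y. c * d x y) \<sigma> = Metric_space.MCauchy M d \<sigma>"
    by (simp add: Metric_space.MCauchy_def[OF metric_scale[OF assms]] Metric_space.MCauchy_def[OF MS])
qed

lemma is_mm_scale:
  assumes "is_mm X" "(c::real) > 0"
  shows "is_mm (scale_mm c X)"
proof -
  define M d \<mu> where "M = mm_carrier X" "d = mm_dist X" "\<mu> = mm_meas X"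
  have H: "Metric_space M d" "Metric_space.mcomplete M d"
    "separable_space (Metric_space.mtopology M d)" "prob_space \<mu>"
    "sets \<mu> = metric_borel M d"
    "\<forall>x\<in>M. \<forall>r>0. measure \<mu> (Metric_space.mball M d x r) > 0"
    using assms(1) unfolding is_mm_def Let_def M_d_\<mu>_def by auto
  have "Metric_space M (\<lambda>x y. c * d x y)" using H(1) assms(2) by (rule metric_scale)
  moreover have "Metric_space.mcomplete M (\<lambda>x y. c * d x y)"
    using H(2) assms(2) by (simp add: Metric_space.mcomplete_def[OF metric_scale[OF H(1) assms(2)]] Metric_space.mcomplete_def[OF H(1)] MCauchy_scale[OF H(1)] mtop_scale[OF H(1)])
  moreover have "metric_borel M (\<lambda>x y. c * d x y) = metric_borel M d"
    using assms(2) by (simp add: metric_borel_def mtop_scale[OF H(1)])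
  moreover have "\<forall>x\<in>M. \<forall>r>0. measure \<mu> (Metric_space.mball M (\<lambda>x y. c * d x y) x r) > 0"
    using H(6) assms(2) by (simp add: mball_scale[OF H(1)])
  moreover have "separable_space (Metric_space.mtopology M (\<lambda>x y. c * d x y))"
    using H(3) by (simp add: mtop_scale[OF H(1) assms(2)])
  ultimately show ?thesis using H assms(2)
    unfolding is_mm_def Let_def M_d_\<mu>_def by simp
qed

lemma dominated_scale:
  assumes "is_mm X" "0 < s" "s \<le> 1"
  shows "dominated (scale_mm s X) X"
proof -
  have "Metric_space (mm_carrier X) (mm_dist X)" using assms(1) by (simp add: is_mm_def Let_def)
  then have "\<And>x y. 0 \<le> mm_dist X x y" by (simp add: Metric_space.nonneg)
  then have "\<And>x y. s * mm_dist X x y \<le> mm_dist X x y"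
    using assms by (simp add: mult_left_le_one_le)
  then show ?thesis unfolding dominated_def
    by (intro exI[of _ "\<lambda>x. x"]) (auto simp: measurable_id)
qed


definition boxS :: "mm \<Rightarrow> mm \<Rightarrow> real set" where
  "boxS X Y = {\<epsilon>. \<epsilon> \<ge> 0 \<and>
     (\<exists>\<phi> \<psi> I0. parametrization \<phi> X \<and> parametrization \<psi> Y \<and>
        I0 \<in> sets lborel \<and> I0 \<subseteq> {0..<1} \<and> measure lborel I0 \<ge> 1 - \<epsilon> \<and>
        (\<forall>s\<in>I0. \<forall>t\<in>I0.
           \<bar>mm_dist X (\<phi> s) (\<phi> t) - mm_dist Y (\<psi> s) (\<psi> t)\<bar> \<le> \<epsilon>))}"

lemma box_boxS: "box X Y = Inf (boxS X Y)"
  by (simp add: box_def boxS_def)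

lemma param_scale[simp]: "parametrization \<phi> (scale_mm c X) = parametrization \<phi> X"
  by (simp add: parametrization_def)

lemma boxS_empty_iff: "boxS X Y = {} \<longleftrightarrow> \<not> (\<exists>\<phi> \<psi>. parametrization \<phi> X \<and> parametrization \<psi> Y)"
proof
  assume "boxS X Y = {}"
  then have "(1::real) \<notin> boxS X Y" by simp
  then show "\<not> (\<exists>\<phi> \<psi>. parametrization \<phi> X \<and> parametrization \<psi> Y)"
    unfolding boxS_def by (auto intro!: exI[of _ "{}"])
qed (auto simp: boxS_def)

lemma box_lower: "box X Y \<ge> min 0 (Inf ({}::real set))"
proof (cases "boxS X Y = {}")
  case True then show ?thesis by (simp add: box_boxS)
next
  case False
  have "0 \<le> Inf (boxS X Y)" using False by (intro cInf_greatest) (auto simp: boxS_def)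
  then show ?thesis by (simp add: box_boxS)
qed

lemma bdd_below_box: "bdd_below (box X ` A)"
  by (meson bdd_belowI2 box_lower)

lemma boxS_scale:
  assumes "c > 0" "\<epsilon> \<in> boxS X Y"
  shows "max c 1 * \<epsilon> \<in> boxS (scale_mm c X) (scale_mm c Y)"
proof -
  from assms(2) obtain \<phi> \<psi> I0 where H: "\<epsilon> \<ge> 0" "parametrization \<phi> X" "parametrization \<psi> Y"
    "I0 \<in> sets lborel" "I0 \<subseteq> {0..<1}" "measure lborel I0 \<ge> 1 - \<epsilon>"
    "\<forall>s\<in>I0. \<forall>t\<in>I0. \<bar>mm_dist X (\<phi> s) (\<phi> t) - mm_dist Y (\<psi> s) (\<psi> t)\<bar> \<le> \<epsilon>"
    unfolding boxS_def by blast
  have m1: "\<epsilon> \<le> max c 1 * \<epsilon>" using H(1) by (simp add: mult_right_mono[of 1 "max c 1" \<epsilon>, simplified])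
  have m2: "c * \<epsilon> \<le> max c 1 * \<epsilon>" using H(1) by (simp add: mult_right_mono)
  have "\<forall>s\<in>I0. \<forall>t\<in>I0. \<bar>c * mm_dist X (\<phi> s) (\<phi> t) - c * mm_dist Y (\<psi> s) (\<psi> t)\<bar> \<le> max c 1 * \<epsilon>"
  proof (intro ballI)
    fix s t assume "s \<in> I0" "t \<in> I0"
    then have "\<bar>mm_dist X (\<phi> s) (\<phi> t) - mm_dist Y (\<psi> s) (\<psi> t)\<bar> \<le> \<epsilon>" using H(7) by blast
    then have "c * \<bar>mm_dist X (\<phi> s) (\<phi> t) - mm_dist Y (\<psi> s) (\<psi> t)\<bar> \<le> c * \<epsilon>"
      using assms(1) by (simp add: mult_left_mono)
    moreover have "\<bar>c * mm_dist X (\<phi> s) (\<phi> t) - c * mm_dist Y (\<psi> s) (\<psi> t)\<bar>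
       = c * \<bar>mm_dist X (\<phi> s) (\<phi> t) - mm_dist Y (\<psi> s) (\<psi> t)\<bar>"
      using assms(1) by (simp add: right_diff_distrib[symmetric] abs_mult)
    ultimately show "\<bar>c * mm_dist X (\<phi> s) (\<phi> t) - c * mm_dist Y (\<psi> s) (\<psi> t)\<bar> \<le> max c 1 * \<epsilon>"
      using m2 by linarith
  qed
  moreover have "max c 1 * \<epsilon> \<ge> 0" using H(1) m1 by linarith
  moreover have "measure lborel I0 \<ge> 1 - max c 1 * \<epsilon>" using H(6) m1 by linarith
  ultimately show ?thesis unfolding boxS_def scale_dist param_scale mem_Collect_eq
    using H(2-5) by blast
qed

lemma box_scale_le:
  assumes "c > 0"
  shows "box (scale_mm c X) (scale_mm c Y) \<le> max (box X Y) (max c 1 * box X Y)"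
proof (cases "boxS X Y = {}")
  case True
  then have "boxS (scale_mm c X) (scale_mm c Y) = {}" by (simp add: boxS_empty_iff)
  then show ?thesis using True by (simp add: box_boxS)
next
  case False
  have bd: "bdd_below (boxS (scale_mm c X) (scale_mm c Y))"
    by (intro bdd_belowI[of _ 0]) (auto simp: boxS_def)
  have "box (scale_mm c X) (scale_mm c Y) / max c 1 \<le> Inf (boxS X Y)"
  proof (rule cInf_greatest[OF False])
    fix \<epsilon> assume "\<epsilon> \<in> boxS X Y"
    then have "box (scale_mm c X) (scale_mm c Y) \<le> max c 1 * \<epsilon>"
      unfolding box_boxS using boxS_scale[OF assms] bd by (intro cInf_lower) auto
    then show "box (scale_mm c X) (scale_mm c Y) / max c 1 \<le> \<epsilon>"
      by (simp add: pos_divide_le_eq mult.commute)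
  qed
  then have "box (scale_mm c X) (scale_mm c Y) \<le> max c 1 * box X Y"
    by (simp add: pos_divide_le_eq mult.commute box_boxS)
  then show ?thesis by linarith
qed

lemma maxmono: "(m::real) \<ge> 1 \<Longrightarrow> a \<le> b \<Longrightarrow> max a (m*a) \<le> max b (m*b)"
  by (rule max.mono) (auto simp: mult_left_mono)

lemma box_set_scale_le:
  assumes "c > 0"
  shows "box_set (scale_mm c W) (scale_mm c ` R) \<le> max (box_set W R) (max c 1 * box_set W R)"
proof (cases "R = {}")
  case True then show ?thesis by (simp add: box_set_def)
next
  case False
  define s where "s = box_set W R"
  define m where "m = max c 1"
  have m1: "m \<ge> 1" "m > 0" by (auto simp: m_def)
  show ?thesis unfolding s_def[symmetric] m_def[symmetric]
  proof (rule field_le_epsilon)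
    fix e :: real assume e: "e > 0"
    have "Inf (box W ` R) < s + e/m" unfolding s_def box_set_def using e m1 by simp
    then have "\<exists>x\<in>box W ` R. x < s + e/m" using False by (intro cInf_lessD) auto
    then have "\<exists>Z\<in>R. box W Z < s + e/m" by blast
    then obtain Z where Z: "Z \<in> R" "box W Z < s + e/m" by blast
    have "box_set (scale_mm c W) (scale_mm c ` R) \<le> box (scale_mm c W) (scale_mm c Z)"
      unfolding box_set_def using Z(1) bdd_below_box by (intro cInf_lower) auto
    also have "\<dots> \<le> max (box W Z) (m * box W Z)" using box_scale_le[OF assms] by (simp add: m_def)
    also have "\<dots> \<le> max (s + e/m) (m * (s + e/m))" using Z(2) m1 by (intro maxmono) auto
    also have "\<dots> \<le> max s (m * s) + e"
    proof -
      have "m * (s + e/m) = m * s + e" using m1 by (simp add: field_simps)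
      moreover have "e/m \<le> e" using m1 e by (simp add: divide_le_eq)
      ultimately show ?thesis by (auto simp: max_def)
    qed
    finally show "box_set (scale_mm c W) (scale_mm c ` R) \<le> max s (m * s) + e" .
  qed
qed


lemma scale_pyr_mult[simp]: "scale_pyr a (scale_pyr b P) = scale_pyr (a*b) P"
  by (simp add: scale_pyr_def image_image)

lemma scale_pyr_one[simp]: "scale_pyr 1 P = P"
  by (simp add: scale_pyr_def)

lemma pyr_mm: "pyramid Q \<Longrightarrow> X \<in> Q \<Longrightarrow> is_mm X"
  by (simp add: pyramid_def)

lemma pyr_dom: "pyramid Q \<Longrightarrow> X \<in> Q \<Longrightarrow> 0 < s \<Longrightarrow> s \<le> 1 \<Longrightarrow> scale_mm s X \<in> Q"
  using is_mm_scale dominated_scale pyr_mm unfolding pyramid_def by blast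

lemma scale_subset:
  assumes "pyramid Q" "0 < s" "s \<le> u"
  shows "scale_pyr s Q \<subseteq> scale_pyr u Q"
proof
  fix X assume "X \<in> scale_pyr s Q"
  then obtain Y where Y: "Y \<in> Q" "X = scale_mm s Y" by (auto simp: scale_pyr_def)
  have inQ: "scale_mm (s/u) Y \<in> Q" using assms Y by (intro pyr_dom) auto
  have eqX: "X = scale_mm u (scale_mm (s/u) Y)" using Y assms by simp
  show "X \<in> scale_pyr u Q" unfolding scale_pyr_def using eqX inQ by (rule image_eqI)
qed

lemma box_set_mono:
  assumes "pyramid Q" "0 < s" "s \<le> u"
  shows "box_set X (scale_pyr u Q) \<le> box_set X (scale_pyr s Q)"
  unfolding box_set_def
proof (rule cInf_superset_mono)
  show "box X ` scale_pyr s Q \<noteq> {}" using assms(1) by (auto simp: pyramid_def scale_pyr_def)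
  show "bdd_below (box X ` scale_pyr u Q)" by (rule bdd_below_box)
  show "box X ` scale_pyr s Q \<subseteq> box X ` scale_pyr u Q"
    using scale_subset[OF assms] by blast
qed

lemma fix_lemma:
  assumes P: "pyramid P" and u: "u > 1" and sub: "scale_pyr u P \<subseteq> P" and s: "s > 0"
  shows "scale_pyr s P = P"
proof -
  have pow: "scale_mm (u^n) X \<in> P" if "X \<in> P" for X n
  proof (induction n)
    case 0 then show ?case using that by simp
  next
    case (Suc n)
    then have "scale_mm u (scale_mm (u^n) X) \<in> P" using sub by (auto simp: scale_pyr_def)
    then show ?case by (simp add: mult.commute)
  qed
  have gen: "scale_pyr r P \<subseteq> P" if r: "r > 0" for r
  proof
    fix X assume "X \<in> scale_pyr r P"
    then obtain Y where Y: "Y \<in> P" "X = scale_mm r Y" by (auto simp: scale_pyr_def)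
    obtain n where n: "r < u^n" using real_arch_pow[OF u] by blast
    have upos: "u^n > 0" using u by simp
    have "scale_mm (r / u^n) (scale_mm (u^n) Y) \<in> P"
      using r n upos by (intro pyr_dom[OF P pow[OF Y(1), of n]]) auto
    then show "X \<in> P" using Y upos u by simp
  qed
  have "P = scale_pyr s (scale_pyr (1/s) P)" using s by simp
  also have "\<dots> \<subseteq> scale_pyr s P" using gen[of "1/s"] s by (simp add: scale_pyr_def image_mono)
  finally show ?thesis using gen[OF s] by blast
qed

lemma not_fixed:
  assumes "P \<in> Pi_star" "u > 1"
  shows "\<not> scale_pyr u P \<subseteq> P"
  using assms fix_lemma unfolding Pi_star_def by blast

lemma liminf_pos:
  assumes "0 < liminf (\<lambda>n. ereal (f n))"
  shows "\<exists>\<epsilon>>0. eventually (\<lambda>n. \<epsilon> < f n) sequentially"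
proof -
  obtain y where y: "0 < y" "y < liminf (\<lambda>n. ereal (f n))" using assms dense by blast
  obtain z where z: "0 < z" "z < y" using y(1) dense by blast
  have "eventually (\<lambda>n. z < ereal (f n)) sequentially"
    using y(2) z(2) le_Liminf_iff[of y sequentially "\<lambda>n. ereal (f n)"] by auto
  moreover obtain zr where zr: "z = ereal zr" "zr > 0" using z by (cases z) auto
  ultimately have "eventually (\<lambda>n. zr < f n) sequentially" by simp
  then show ?thesis using zr by blast
qed


lemma part1:
  assumes "P \<in> Pi_star" "t > 0" "scale_pyr t P = P"
  shows "t = 1"
proof (rule ccontr)
  assume "t \<noteq> 1"
  then consider "t > 1" | "t < 1" by linarith
  then show False
  proof cases
    case 1 then show False using not_fixed[OF assms(1) 1] assms(3) by simp
  next
    case 2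
    have "scale_pyr (1/t) P = scale_pyr (1/t) (scale_pyr t P)" using assms(3) by simp
    also have "\<dots> = P" using assms(2) by simp
    finally show False using not_fixed[OF assms(1), of "1/t"] 2 assms(2) by simp
  qed
qed

lemma case1:
  assumes Ps: "\<forall>n. Ps n \<in> Pi_star" and ts: "\<forall>n. ts n > 0" and P: "P \<in> Pi_star" and t: "t > 0"
    and w1: "weak_conv Ps P"
    and w2: "weak_conv (\<lambda>n. scale_pyr (ts n) (Ps n)) (scale_pyr t P)"
    and b: "b > t" and fr: "\<exists>\<^sub>F n in sequentially. ts n \<ge> b"
  shows False
proof -
  have pyrP: "pyramid P" using P by (simp add: Pi_star_def)
  have pyrPs: "pyramid (Ps n)" for n using Ps by (simp add: Pi_star_def)
  have sub: "scale_pyr b P \<subseteq> scale_pyr t P"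
  proof
    fix X assume "X \<in> scale_pyr b P"
    then obtain Y where Y: "Y \<in> P" "X = scale_mm b Y" by (auto simp: scale_pyr_def)
    have mmX: "is_mm X" using Y b t is_mm_scale pyr_mm[OF pyrP] by simp
    show "X \<in> scale_pyr t P"
    proof (rule ccontr)
      assume "X \<notin> scale_pyr t P"
      then have LI: "0 < liminf (\<lambda>n. ereal (box_set X (scale_pyr (ts n) (Ps n))))"
        using w2 mmX unfolding weak_conv_def by blast
      then obtain \<delta> where d: "\<delta> > 0" and ev1: "eventually (\<lambda>n. \<delta> < box_set X (scale_pyr (ts n) (Ps n))) sequentially"
        using liminf_pos[OF LI] by blast
      define m where "m = max b 1"
      have m: "m \<ge> 1" "m > 0" by (auto simp: m_def)
      have "(\<lambda>n. box_set Y (Ps n)) \<longlonglongrightarrow> 0" using w1 Y(1) unfolding weak_conv_def by blast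
      then have ev2: "eventually (\<lambda>n. box_set Y (Ps n) < \<delta>/m) sequentially"
        using d m by (intro order_tendstoD(2)) auto
      have ev3: "eventually (\<lambda>n. box_set X (scale_pyr b (Ps n)) < \<delta>) sequentially"
        using ev2
      proof (rule eventually_mono)
        fix n assume H: "box_set Y (Ps n) < \<delta>/m"
        have "box_set X (scale_pyr b (Ps n)) \<le> max (box_set Y (Ps n)) (m * box_set Y (Ps n))"
          using box_set_scale_le[of b Y "Ps n"] b t Y(2) by (simp add: m_def scale_pyr_def)
        moreover have "m * box_set Y (Ps n) < \<delta>" using H m by (simp add: field_simps)
        moreover have "\<delta>/m \<le> \<delta>" using m d by (simp add: divide_le_eq)
        ultimately show "box_set X (scale_pyr b (Ps n)) < \<delta>" using H by linarith
      qed
      have "\<exists>\<^sub>F n in sequentially. False"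
        using fr
      proof (rule frequently_rev_mp)
        show "\<forall>\<^sub>F n in sequentially. b \<le> ts n \<longrightarrow> False"
          using ev1 ev3
        proof eventually_elim
          case (elim n)
          show ?case
          proof
            assume "b \<le> ts n"
            then have "box_set X (scale_pyr (ts n) (Ps n)) \<le> box_set X (scale_pyr b (Ps n))"
              using pyrPs b t by (intro box_set_mono) auto
            then show False using elim by linarith
          qed
        qed
      qed
      then show False by simp
    qed
  qed
  have "scale_pyr (b/t) P = scale_pyr (1/t) (scale_pyr b P)" by simp
  also have "\<dots> \<subseteq> scale_pyr (1/t) (scale_pyr t P)" using sub by (simp only: scale_pyr_def image_mono)
  also have "\<dots> = P" using t by simp
  finally show False using not_fixed[OF P, of "b/t"] b t by simp
qed


lemma case2:
  assumes Ps: "\<forall>n. Ps n \<in> Pi_star" and ts: "\<forall>n. ts n > 0" and P: "P \<in> Pi_star" and t: "t > 0"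
    and w1: "weak_conv Ps P"
    and w2: "weak_conv (\<lambda>n. scale_pyr (ts n) (Ps n)) (scale_pyr t P)"
    and a: "a < t" "a > 0" and fr: "\<exists>\<^sub>F n in sequentially. ts n \<le> a"
  shows False
proof -
  have pyrP: "pyramid P" using P by (simp add: Pi_star_def)
  have pyrPs: "pyramid (Ps n)" for n using Ps by (simp add: Pi_star_def)
  have sub: "scale_pyr t P \<subseteq> scale_pyr a P"
  proof
    fix X assume XtP: "X \<in> scale_pyr t P"
    then obtain Y where Y: "Y \<in> P" "X = scale_mm t Y" by (auto simp: scale_pyr_def)
    have mmX: "is_mm X" using Y t is_mm_scale pyr_mm[OF pyrP] by simp
    show "X \<in> scale_pyr a P"
    proof (rule ccontr)
      assume nX: "X \<notin> scale_pyr a P"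
      define X' where "X' = scale_mm (1/a) X"
      have mmX': "is_mm X'" using mmX a by (simp add: X'_def is_mm_scale)
      have "X' \<notin> P"
      proof
        assume "X' \<in> P"
        then have "scale_mm a X' \<in> scale_pyr a P" by (simp add: scale_pyr_def)
        then show False using nX a by (simp add: X'_def)
      qed
      then have LI: "0 < liminf (\<lambda>n. ereal (box_set X' (Ps n)))"
        using w1 mmX' unfolding weak_conv_def by blast
      obtain \<delta> where d: "\<delta> > 0" and ev1: "eventually (\<lambda>n. \<delta> < box_set X' (Ps n)) sequentially"
        using liminf_pos[OF LI] by blast
      define m where "m = max (1/a) 1"
      have m: "m \<ge> 1" "m > 0" by (auto simp: m_def)
      have "(\<lambda>n. box_set X (scale_pyr (ts n) (Ps n))) \<longlonglongrightarrow> 0"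
        using w2 XtP unfolding weak_conv_def by blast
      then have ev2: "eventually (\<lambda>n. box_set X (scale_pyr (ts n) (Ps n)) < \<delta>/m) sequentially"
        using d m by (intro order_tendstoD(2)) auto
      have "\<exists>\<^sub>F n in sequentially. False"
        using fr
      proof (rule frequently_rev_mp)
        show "\<forall>\<^sub>F n in sequentially. ts n \<le> a \<longrightarrow> False"
          using ev1 ev2
        proof eventually_elim
          case (elim n)
          show ?case
          proof
            assume "ts n \<le> a"
            then have r1: "box_set X (scale_pyr a (Ps n)) \<le> box_set X (scale_pyr (ts n) (Ps n))"
              using pyrPs ts by (intro box_set_mono) auto
            define r where "r = box_set X (scale_pyr a (Ps n))"
            have "box_set X' (Ps n) = box_set (scale_mm (1/a) X) (scale_mm (1/a) ` scale_pyr a (Ps n))"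
              using a by (simp add: X'_def scale_pyr_def image_image)
            also have "\<dots> \<le> max r (m * r)"
              using box_set_scale_le[of "1/a" X "scale_pyr a (Ps n)"] a by (simp add: r_def m_def)
            finally have r2: "box_set X' (Ps n) \<le> max r (m * r)" .
            have r3: "r < \<delta>/m" using r1 elim(2) r_def by linarith
            then have "m * r < \<delta>" using m by (simp add: field_simps)
            moreover have "\<delta>/m \<le> \<delta>" using m d by (simp add: divide_le_eq)
            ultimately show False using r2 r3 elim(1) by linarith
          qed
        qed
      qed
      then show False by simp
    qed
  qed
  have "scale_pyr (t/a) P = scale_pyr (1/a) (scale_pyr t P)" by simp
  also have "\<dots> \<subseteq> scale_pyr (1/a) (scale_pyr a P)" using sub by (simp only: scale_pyr_def image_mono)
  also have "\<dots> = P" using a by simp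
  finally show False using not_fixed[OF P, of "t/a"] a t by simp
qed

theorem proposition3p11:
  shows "(\<forall>P\<in>Pi_star. \<forall>t::real. t > 0 \<longrightarrow> scale_pyr t P = P \<longrightarrow> t = 1) \<and>
         (\<forall>(Ps :: nat \<Rightarrow> mm set) (ts :: nat \<Rightarrow> real) P t.
            (\<forall>n. Ps n \<in> Pi_star) \<longrightarrow> (\<forall>n. ts n > 0) \<longrightarrow> P \<in> Pi_star \<longrightarrow> t > 0 \<longrightarrow>
            weak_conv Ps P \<longrightarrow>
            weak_conv (\<lambda>n. scale_pyr (ts n) (Ps n)) (scale_pyr t P) \<longrightarrow>
            ts \<longlonglongrightarrow> t)"
proof (intro conjI allI ballI impI)
  fix P t assume "P \<in> Pi_star" "(t::real) > 0" "scale_pyr t P = P"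
  then show "t = 1" by (rule part1)
next
  fix Ps :: "nat \<Rightarrow> mm set" and ts :: "nat \<Rightarrow> real" and P t
  assume A: "\<forall>n. Ps n \<in> Pi_star" "\<forall>n. ts n > 0" "P \<in> Pi_star" "t > 0"
    "weak_conv Ps P" "weak_conv (\<lambda>n. scale_pyr (ts n) (Ps n)) (scale_pyr t P)"
  show "ts \<longlonglongrightarrow> t"
  proof (rule tendstoI, rule ccontr)
    fix e :: real assume e: "e > 0" and ne: "\<not> eventually (\<lambda>n. dist (ts n) t < e) sequentially"
    define e' where "e' = min e (t/2)"
    have e': "e' > 0" "e' \<le> e" "e' \<le> t/2" using e A(4) by (auto simp: e'_def)
    have "\<exists>\<^sub>F n in sequentially. \<not> dist (ts n) t < e" using ne by (simp add: not_eventually)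
    then have "\<exists>\<^sub>F n in sequentially. ts n \<ge> t + e' \<or> ts n \<le> t - e'"
      by (rule frequently_elim1) (use e' in \<open>auto simp: dist_real_def\<close>)
    then consider "\<exists>\<^sub>F n in sequentially. ts n \<ge> t + e'" | "\<exists>\<^sub>F n in sequentially. ts n \<le> t - e'"
      by (auto simp: frequently_disj_iff)
    then show False
    proof cases
      case 1 then show False using case1[OF A, of "t + e'"] e' by simp
    next
      case 2 then show False using case2[OF A, of "t - e'"] e' by simp
    qed
  qed
qed

end
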